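(* Let $n\ge1$, $L,\underline b>0$, and let $(k_p,k_i)\in(0,\infty)^2$ satisfy $k_p^2\underline b>k_pL+k_i+L^2/(4\underline b)$. Then the $2n\times2n$ matrix $$P=\begin{bmatrix}2k_pk_i\underline bI_n&k_iI_n\\k_iI_n&k_pI_n\end{bmatrix}$$ is positive definite. Moreover, there exists $\gamma>0$, depending only on $(k_i,k_p,L,\underline b)$, such that for all $n\times n$ real matrices $a,\theta$ with $\|a\|\le L$ and $\mathrm{Sym}[\theta]\ge\underline bI_n$, the matrix $$A=\begin{bmatrix}0_n&I_n\\-k_i\theta&a-k_p\theta\end{bmatrix}$$ satisfies $PA+A^{\mathsf T}P\le-\gamma I_{2n}$.
   Context: $\|\cdot\|$ is the operator norm induced by the Euclidean norm; $\mathrm{Sym}[\theta]=(\theta+\theta^{\mathsf T})/2$; for symmetric matrices, $S_1\ge S_2$ means $S_1-S_2$ is positive semidefinite; $0_n$ and $I_n$ are the $n\times n$ zero and identity matrices. *)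

theory Defs
  imports "Jordan_Normal_Form.Matrix"
begin

definition vec_norm :: "real vec \<Rightarrow> real" where
  "vec_norm x = sqrt (x \<bullet> x)"

definition mat_opnorm :: "real mat \<Rightarrow> real" where
  "mat_opnorm A = Sup {vec_norm (A *\<^sub>v x) | x. x \<in> carrier_vec (dim_col A) \<and> vec_norm x \<le> 1}"

definition sym_part :: "real mat \<Rightarrow> real mat" where
  "sym_part A = (1/2) \<cdot>\<^sub>m (A + transpose_mat A)"

definition psd :: "nat \<Rightarrow> real mat \<Rightarrow> bool" where
  "psd n S \<longleftrightarrow> S \<in> carrier_mat n n \<and> transpose_mat S = S \<and>
     (\<forall>x \<in> carrier_vec n. 0 \<le> x \<bullet> (S *\<^sub>v x))"

definition loewner_le :: "nat \<Rightarrow> real mat \<Rightarrow> real mat \<Rightarrow> bool" where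
  "loewner_le n S1 S2 \<longleftrightarrow> S1 \<in> carrier_mat n n \<and> S2 \<in> carrier_mat n n \<and> psd n (S2 - S1)"

definition pos_def :: "nat \<Rightarrow> real mat \<Rightarrow> bool" where
  "pos_def m P \<longleftrightarrow> P \<in> carrier_mat m m \<and> transpose_mat P = P \<and>
     (\<forall>x \<in> carrier_vec m. x \<noteq> 0\<^sub>v m \<longrightarrow> 0 < x \<bullet> (P *\<^sub>v x))"

definition Pmat :: "nat \<Rightarrow> real \<Rightarrow> real \<Rightarrow> real \<Rightarrow> real mat" where
  "Pmat n kp ki b = four_block_mat
     ((2 * kp * ki * b) \<cdot>\<^sub>m 1\<^sub>m n) (ki \<cdot>\<^sub>m 1\<^sub>m n)
     (ki \<cdot>\<^sub>m 1\<^sub>m n) (kp \<cdot>\<^sub>m 1\<^sub>m n)"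

definition Amat :: "nat \<Rightarrow> real \<Rightarrow> real \<Rightarrow> real mat \<Rightarrow> real mat \<Rightarrow> real mat" where
  "Amat n kp ki a \<theta> = four_block_mat
     (0\<^sub>m n n) (1\<^sub>m n)
     (- (ki \<cdot>\<^sub>m \<theta>)) (a - kp \<cdot>\<^sub>m \<theta>)"

end

theory Submission
  imports Defs
begin

lemma quad_disc:
  fixes A B C :: real
  assumes "C \<ge> 0" and "\<And>t. 0 \<le> A + 2*B*t + C*t^2"
  shows "B^2 \<le> A*C"
proof (cases "C = 0")
  case True
  show ?thesis
  proof (rule ccontr)
    assume "\<not> ?thesis"
    then have "B \<noteq> 0" using True by auto
    have "0 \<le> A + 2*B*(-(A+1)/(2*B)) + C*(-(A+1)/(2*B))^2" by (rule assms(2))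
    also have "\<dots> = -1" using True \<open>B \<noteq> 0\<close> by (simp add: field_simps)
    finally show False by simp
  qed
next
  case False
  then have C: "C > 0" using assms(1) by simp
  have "0 \<le> A + 2*B*(-B/C) + C*(-B/C)^2" by (rule assms(2))
  also have "\<dots> = A - B^2/C" using C by (simp add: field_simps power2_eq_square)
  finally have "B^2/C \<le> A" by simp
  then show ?thesis using C by (simp add: field_simps mult.commute)
qed

lemma sp_self_ge0: fixes x :: "real vec" shows "0 \<le> x \<bullet> x"
  unfolding scalar_prod_def by (auto intro: sum_nonneg)

lemma cs_sq:
  fixes x y :: "real vec"
  assumes x: "x \<in> carrier_vec n" and y: "y \<in> carrier_vec n"
  shows "(x \<bullet> y)^2 \<le> (y \<bullet> y) * (x \<bullet> x)"
proof (rule quad_disc)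
  show "0 \<le> x \<bullet> x" by (rule sp_self_ge0)
  fix t
  have "0 \<le> (y + t \<cdot>\<^sub>v x) \<bullet> (y + t \<cdot>\<^sub>v x)" by (rule sp_self_ge0)
  also have "\<dots> = y \<bullet> y + 2 * (x \<bullet> y) * t + (x \<bullet> x) * t^2"
    using x y by (simp add: add_scalar_prod_distrib[of _ n] scalar_prod_add_distrib[of _ n]
       comm_scalar_prod[of y n x] power2_eq_square algebra_simps)
  finally show "0 \<le> y \<bullet> y + 2 * (x \<bullet> y) * t + (x \<bullet> x) * t^2" .
qed

lemma cs:
  fixes x y :: "real vec"
  assumes x: "x \<in> carrier_vec n" and y: "y \<in> carrier_vec n"
  shows "\<bar>x \<bullet> y\<bar> \<le> vec_norm x * vec_norm y"
proof -
  have "\<bar>x \<bullet> y\<bar> = sqrt ((x \<bullet> y)^2)" by simp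
  also have "\<dots> \<le> sqrt ((x \<bullet> x) * (y \<bullet> y))" using real_sqrt_le_mono[OF cs_sq[OF x y]] by (simp add: mult.commute)
  also have "\<dots> = vec_norm x * vec_norm y" unfolding vec_norm_def by (simp add: real_sqrt_mult)
  finally show ?thesis .
qed

lemma vec_norm_sq: fixes x :: "real vec" shows "(vec_norm x)^2 = x \<bullet> x" unfolding vec_norm_def using sp_self_ge0 by simp
lemma vec_norm_ge0: fixes x :: "real vec" shows "0 \<le> vec_norm x" unfolding vec_norm_def using sp_self_ge0[of x] by simp

lemma vec_norm_smult: fixes x :: "real vec" shows "vec_norm (c \<cdot>\<^sub>v x) = \<bar>c\<bar> * vec_norm x"
proof -
  have "(c \<cdot>\<^sub>v x) \<bullet> (c \<cdot>\<^sub>v x) = c^2 * (x \<bullet> x)"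
    by (simp add: power2_eq_square)
  then show ?thesis unfolding vec_norm_def by (simp add: real_sqrt_mult)
qed

lemma mat_vec_bound:
  fixes a :: "real mat"
  assumes a: "a \<in> carrier_mat n n" and x: "x \<in> carrier_vec n"
  shows "vec_norm (a *\<^sub>v x) \<le> sqrt (\<Sum>i<n. row a i \<bullet> row a i) * vec_norm x"
proof -
  have "(a *\<^sub>v x) \<bullet> (a *\<^sub>v x) = (\<Sum>i<n. (row a i \<bullet> x)^2)"
    using a unfolding scalar_prod_def[of "a *\<^sub>v x"] by (simp add: power2_eq_square lessThan_atLeast0)
  also have "\<dots> \<le> (\<Sum>i<n. (row a i \<bullet> row a i) * (x \<bullet> x))"
  proof (rule sum_mono)
    fix i assume "i \<in> {..<n}"
    have "row a i \<in> carrier_vec n" using a by auto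
    then show "(row a i \<bullet> x)^2 \<le> (row a i \<bullet> row a i) * (x \<bullet> x)" using cs_sq[OF x, of "row a i"] x
      by (simp add: comm_scalar_prod[of x n "row a i"])
  qed
  also have "\<dots> = (\<Sum>i<n. row a i \<bullet> row a i) * (vec_norm x)^2"
    by (simp add: vec_norm_sq sum_distrib_right)
  finally have "(vec_norm (a *\<^sub>v x))^2 \<le> (sqrt (\<Sum>i<n. row a i \<bullet> row a i) * vec_norm x)^2"
    by (simp add: vec_norm_sq power_mult_distrib sum_nonneg sp_self_ge0)
  then show ?thesis
    using power2_le_imp_le vec_norm_ge0 by (metis mult_nonneg_nonneg real_sqrt_ge_zero sp_self_ge0 sum_nonneg)
qed

lemma opnorm_bound:
  fixes a :: "real mat"
  assumes a: "a \<in> carrier_mat n n" and L: "mat_opnorm a \<le> L" and v: "v \<in> carrier_vec n"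
  shows "vec_norm (a *\<^sub>v v) \<le> L * vec_norm v"
proof -
  define K where "K = sqrt (\<Sum>i<n. row a i \<bullet> row a i)"
  have K0: "K \<ge> 0" unfolding K_def by (simp add: sum_nonneg sp_self_ge0)
  let ?S = "{vec_norm (a *\<^sub>v x) | x. x \<in> carrier_vec (dim_col a) \<and> vec_norm x \<le> 1}"
  have bdd: "bdd_above ?S"
  proof (rule bdd_aboveI)
    fix y assume "y \<in> ?S"
    then obtain x where x: "x \<in> carrier_vec n" "vec_norm x \<le> 1" and y: "y = vec_norm (a *\<^sub>v x)"
      using a by auto
    have "y \<le> K * vec_norm x" using mat_vec_bound[OF a x(1)] y K_def by simp
    also have "\<dots> \<le> K" using K0 x(2) by (simp add: mult_left_le)
    finally show "y \<le> K" .
  qed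
  show ?thesis
  proof (cases "vec_norm v = 0")
    case True
    then show ?thesis using mat_vec_bound[OF a v] vec_norm_ge0[of "a *\<^sub>v v"] by simp
  next
    case False
    define N where "N = vec_norm v"
    have N: "N > 0" using False vec_norm_ge0[of v] N_def by simp
    define x where "x = (1/N) \<cdot>\<^sub>v v"
    have x: "x \<in> carrier_vec n" "vec_norm x = 1" using v N unfolding x_def
      by (auto simp: vec_norm_smult N_def)
    have "vec_norm (a *\<^sub>v x) \<in> ?S" using x a by auto
    then have "vec_norm (a *\<^sub>v x) \<le> L" using cSup_upper[OF _ bdd] L unfolding mat_opnorm_def by force
    moreover have "a *\<^sub>v x = (1/N) \<cdot>\<^sub>v (a *\<^sub>v v)" unfolding x_def using mult_mat_vec[OF a v] .
    ultimately have "(1/N) * vec_norm (a *\<^sub>v v) \<le> L" using N by (simp add: vec_norm_smult)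
    then show ?thesis using N N_def by (simp add: field_simps)
  qed
qed

lemma smult_mat_vec[simp]: fixes A :: "real mat"
  shows "dim_col A = dim_vec v \<Longrightarrow> (k \<cdot>\<^sub>m A) *\<^sub>v v = k \<cdot>\<^sub>v (A *\<^sub>v v)"
  by (rule eq_vecI) (auto simp: scalar_prod_def sum_distrib_left ac_simps)

lemma Pmat_carrier: "Pmat n kp ki b \<in> carrier_mat (2*n) (2*n)"
  unfolding Pmat_def mult_2 by (rule four_block_carrier_mat) auto

lemma Amat_carrier: "a \<in> carrier_mat n n \<Longrightarrow> \<theta> \<in> carrier_mat n n \<Longrightarrow> Amat n kp ki a \<theta> \<in> carrier_mat (2*n) (2*n)"
  unfolding Amat_def mult_2 by (rule four_block_carrier_mat) auto

lemma Pmat_sym: "transpose_mat (Pmat n kp ki b) = Pmat n kp ki b"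
  unfolding Pmat_def by (subst transpose_four_block_mat) auto

lemma Pmat_vec:
  assumes u: "u \<in> carrier_vec n" and v: "v \<in> carrier_vec n"
  shows "Pmat n kp ki b *\<^sub>v (u @\<^sub>v v) = ((2*kp*ki*b) \<cdot>\<^sub>v u + ki \<cdot>\<^sub>v v) @\<^sub>v (ki \<cdot>\<^sub>v u + kp \<cdot>\<^sub>v v)"
  unfolding Pmat_def
  apply (subst four_block_mat_mult_vec[of _ n n _ n _ n])
  using u v by auto

lemma Amat_vec:
  fixes a \<theta> :: "real mat"
  assumes a: "a \<in> carrier_mat n n" and th: "\<theta> \<in> carrier_mat n n"
    and u: "u \<in> carrier_vec n" and v: "v \<in> carrier_vec n"
  shows "Amat n kp ki a \<theta> *\<^sub>v (u @\<^sub>v v) = v @\<^sub>v (a *\<^sub>v v - \<theta> *\<^sub>v (ki \<cdot>\<^sub>v u + kp \<cdot>\<^sub>v v))"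
  unfolding Amat_def
  apply (subst four_block_mat_mult_vec[of _ n n _ n _ n])
  using a th u v apply auto
  apply (rule eq_vecI)
  apply (auto simp: algebra_simps)
  done

lemma quad_pos:
  fixes A B C :: real
  assumes A: "A > 0" and C: "C > 0" and D: "B^2 < 4*A*C"
  shows "\<exists>\<mu>>0. \<forall>s t. \<mu> * (s^2 + t^2) \<le> A*s^2 - B*s*t + C*t^2"
proof -
  define d where "d = (4*A*C - B^2) / (4*A*C)"
  have d: "0 < d" "d \<le> 1" using A C D unfolding d_def by (auto simp: field_simps)
  define \<mu> where "\<mu> = min A C * d / 2"
  have mu: "\<mu> > 0" using A C d unfolding \<mu>_def by simp
  have mA: "\<mu> \<le> A * d / 2" and mC: "\<mu> \<le> C * d / 2" using d unfolding \<mu>_def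
    by (auto simp: min_def mult_right_mono)
  have A': "A - \<mu> \<ge> A * (1 - d/2)" and C': "C - \<mu> \<ge> C * (1 - d/2)" using mA mC by (auto simp: algebra_simps)
  have pA: "A * (1 - d/2) > 0" and pC: "C * (1 - d/2) > 0" using A C d by auto
  have "4*(A-\<mu>)*(C-\<mu>) \<ge> 4*(A*(1-d/2))*(C*(1-d/2))"
  proof -
    have "(A*(1-d/2))*(C*(1-d/2)) \<le> (A-\<mu>)*(C-\<mu>)"
      by (rule mult_mono[OF A' C']) (use pA pC A' in linarith)+
    then show ?thesis by (simp only: mult.assoc)
  qed
  moreover have "4*(A*(1-d/2))*(C*(1-d/2)) = 4*A*C*(1-d/2)^2" by (simp add: power2_eq_square algebra_simps)
  moreover have "4*A*C*(1-d/2)^2 \<ge> 4*A*C*(1-d)"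
    using A C by (intro mult_left_mono) (auto simp: power2_eq_square algebra_simps)
  moreover have "4*A*C*(1-d) = B^2" using A C unfolding d_def by (simp add: field_simps)
  ultimately have key: "B^2 \<le> 4*(A-\<mu>)*(C-\<mu>)" by linarith
  have Ap: "A - \<mu> > 0" using A' pA by linarith
  show ?thesis
  proof (intro exI[of _ \<mu>] conjI allI mu)
    fix s t :: real
    have "0 \<le> (2*(A-\<mu>)*s - B*t)^2 + (4*(A-\<mu>)*(C-\<mu>) - B^2)*t^2"
      using key by (intro add_nonneg_nonneg) auto
    also have "\<dots> = 4*(A-\<mu>)*((A-\<mu>)*s^2 - B*s*t + (C-\<mu>)*t^2)" by (simp add: power2_eq_square algebra_simps)
    finally have "0 \<le> (A-\<mu>)*s^2 - B*s*t + (C-\<mu>)*t^2" using Ap by (simp add: zero_le_mult_iff)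
    then show "\<mu> * (s^2 + t^2) \<le> A*s^2 - B*s*t + C*t^2" by (simp add: algebra_simps)
  qed
qed

lemma sp_self_zero:
  fixes z :: "real vec"
  assumes z: "z \<in> carrier_vec m" and "z \<bullet> z = 0"
  shows "z = 0\<^sub>v m"
proof (rule eq_vecI)
  have "\<forall>i\<in>{0..<dim_vec z}. z $ i * z $ i = 0"
    using assms(2) unfolding scalar_prod_def by (subst sum_nonneg_eq_0_iff[symmetric]) auto
  then show "\<And>i. i < dim_vec (0\<^sub>v m) \<Longrightarrow> z $ i = 0\<^sub>v m $ i" using z by auto
qed (use z in auto)

lemma sym_part_bound:
  fixes \<theta> :: "real mat"
  assumes th: "\<theta> \<in> carrier_mat n n" and le: "loewner_le n (b \<cdot>\<^sub>m 1\<^sub>m n) (sym_part \<theta>)"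
    and w: "w \<in> carrier_vec n"
  shows "b * (w \<bullet> w) \<le> w \<bullet> (\<theta> *\<^sub>v w)"
proof -
  have S: "sym_part \<theta> \<in> carrier_mat n n" using th unfolding sym_part_def by auto
  have "0 \<le> w \<bullet> ((sym_part \<theta> - b \<cdot>\<^sub>m 1\<^sub>m n) *\<^sub>v w)" using le w unfolding loewner_le_def psd_def by auto
  also have "(sym_part \<theta> - b \<cdot>\<^sub>m 1\<^sub>m n) *\<^sub>v w = sym_part \<theta> *\<^sub>v w - b \<cdot>\<^sub>v w"
    using S w by (simp add: minus_mult_distrib_mat_vec[OF S _ w])
  also have "sym_part \<theta> *\<^sub>v w = (1/2) \<cdot>\<^sub>v (\<theta> *\<^sub>v w + transpose_mat \<theta> *\<^sub>v w)"
    unfolding sym_part_def using th w by (simp add: add_mult_distrib_mat_vec[of _ n n])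
  also have "w \<bullet> ((1/2) \<cdot>\<^sub>v (\<theta> *\<^sub>v w + transpose_mat \<theta> *\<^sub>v w) - b \<cdot>\<^sub>v w)
     = (1/2) * (w \<bullet> (\<theta> *\<^sub>v w) + w \<bullet> (transpose_mat \<theta> *\<^sub>v w)) - b * (w \<bullet> w)"
    using th w by (simp add: scalar_prod_minus_distrib[of _ n] scalar_prod_add_distrib[of _ n])
  also have "w \<bullet> (transpose_mat \<theta> *\<^sub>v w) = w \<bullet> (\<theta> *\<^sub>v w)"
    using th w by (simp add: comm_scalar_prod[of w n] transpose_vec_mult_scalar[OF th w w])
  finally show ?thesis by simp
qed

lemma P_form:
  fixes u v :: "real vec"
  assumes u: "u \<in> carrier_vec n" and v: "v \<in> carrier_vec n"
  shows "(u @\<^sub>v v) \<bullet> (Pmat n kp ki b *\<^sub>v (u @\<^sub>v v)) = (2*kp*ki*b) * (u \<bullet> u) + 2*ki*(u \<bullet> v) + kp * (v \<bullet> v)"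
  using u v
  by (simp add: Pmat_vec scalar_prod_append[of _ n _ n] scalar_prod_add_distrib[of _ n]
       comm_scalar_prod[of v n u] algebra_simps)

lemma PA_form:
  fixes u v :: "real vec" and a \<theta> :: "real mat"
  assumes a: "a \<in> carrier_mat n n" and th: "\<theta> \<in> carrier_mat n n"
    and u: "u \<in> carrier_vec n" and v: "v \<in> carrier_vec n"
  shows "(Pmat n kp ki b *\<^sub>v (u @\<^sub>v v)) \<bullet> (Amat n kp ki a \<theta> *\<^sub>v (u @\<^sub>v v)) =
     (2*kp*ki*b) * (u \<bullet> v) + ki * (v \<bullet> v) + (ki \<cdot>\<^sub>v u + kp \<cdot>\<^sub>v v) \<bullet> (a *\<^sub>v v)
     - (ki \<cdot>\<^sub>v u + kp \<cdot>\<^sub>v v) \<bullet> (\<theta> *\<^sub>v (ki \<cdot>\<^sub>v u + kp \<cdot>\<^sub>v v))"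
  using a th u v
  by (simp add: Pmat_vec Amat_vec scalar_prod_append[of _ n _ n] add_scalar_prod_distrib[of _ n]
       scalar_prod_minus_distrib[of _ n] algebra_simps)

lemma Q_form:
  fixes z :: "real vec" and a \<theta> :: "real mat"
  assumes a: "a \<in> carrier_mat n n" and th: "\<theta> \<in> carrier_mat n n"
    and z: "z \<in> carrier_vec (2*n)"
  shows "z \<bullet> ((Pmat n kp ki b * Amat n kp ki a \<theta> + transpose_mat (Amat n kp ki a \<theta>) * Pmat n kp ki b) *\<^sub>v z)
    = 2 * ((Pmat n kp ki b *\<^sub>v z) \<bullet> (Amat n kp ki a \<theta> *\<^sub>v z))"
proof -
  let ?P = "Pmat n kp ki b" let ?A = "Amat n kp ki a \<theta>"
  have P: "?P \<in> carrier_mat (2*n) (2*n)" by (rule Pmat_carrier)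
  have A: "?A \<in> carrier_mat (2*n) (2*n)" by (rule Amat_carrier[OF a th])
  have "(?P * ?A + transpose_mat ?A * ?P) *\<^sub>v z = ?P *\<^sub>v (?A *\<^sub>v z) + transpose_mat ?A *\<^sub>v (?P *\<^sub>v z)"
    using P A z by (simp add: add_mult_distrib_mat_vec[of _ "2*n" "2*n"])
  then have "z \<bullet> ((?P * ?A + transpose_mat ?A * ?P) *\<^sub>v z) = z \<bullet> (?P *\<^sub>v (?A *\<^sub>v z)) + z \<bullet> (transpose_mat ?A *\<^sub>v (?P *\<^sub>v z))"
    using P A z by (simp add: scalar_prod_add_distrib[of _ "2*n"])
  also have "z \<bullet> (?P *\<^sub>v (?A *\<^sub>v z)) = (?P *\<^sub>v z) \<bullet> (?A *\<^sub>v z)"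
    using transpose_vec_mult_scalar[OF P, of "?A *\<^sub>v z" z] P A z by (simp add: Pmat_sym)
  also have "z \<bullet> (transpose_mat ?A *\<^sub>v (?P *\<^sub>v z)) = (?P *\<^sub>v z) \<bullet> (?A *\<^sub>v z)"
    using transpose_vec_mult_scalar[OF A z, of "?P *\<^sub>v z"] P A z
    by (simp add: comm_scalar_prod[of z "2*n"])
  finally show ?thesis by simp
qed

lemma split_vec2:
  fixes z :: "real vec"
  assumes "z \<in> carrier_vec (2*n)"
  shows "z = vec_first z n @\<^sub>v vec_last z n"
  using assms by (simp add: mult_2)

lemma sp_append_self:
  fixes u v :: "real vec"
  assumes u: "u \<in> carrier_vec n" and v: "v \<in> carrier_vec n"
  shows "(u @\<^sub>v v) \<bullet> (u @\<^sub>v v) = (vec_norm u)^2 + (vec_norm v)^2"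
  using u v by (simp add: scalar_prod_append[of _ n _ n] vec_norm_sq)

lemma part1:
  fixes b kp ki :: real
  assumes "b > 0" and "kp > 0" and "ki > 0" and "ki < 2 * kp^2 * b"
  shows "pos_def (2 * n) (Pmat n kp ki b)"
proof -
  have "(2*ki)^2 < 4*(2*kp*ki*b)*kp"
  proof -
    have "ki * ki < ki * (2 * kp^2 * b)" using assms by simp
    then show ?thesis by (simp add: power2_eq_square algebra_simps)
  qed
  moreover have "2*kp*ki*b > 0" using assms by simp
  ultimately obtain \<mu> where mu: "\<mu> > 0" and q: "\<And>s t. \<mu> * (s^2 + t^2) \<le> (2*kp*ki*b)*s^2 - (2*ki)*s*t + kp*t^2"
    using quad_pos[of "2*kp*ki*b" kp "2*ki"] assms by auto
  show ?thesis unfolding pos_def_def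
  proof (intro conjI ballI impI Pmat_carrier Pmat_sym)
    fix z :: "real vec" assume z: "z \<in> carrier_vec (2*n)" and nz: "z \<noteq> 0\<^sub>v (2*n)"
    define u where "u = vec_first z n"
    define v where "v = vec_last z n"
    have u: "u \<in> carrier_vec n" and v: "v \<in> carrier_vec n" unfolding u_def v_def by auto
    have zz: "z = u @\<^sub>v v" unfolding u_def v_def by (rule split_vec2[OF z])
    have "z \<bullet> z \<noteq> 0" using sp_self_zero[OF z] nz by auto
    then have pos: "(vec_norm u)^2 + (vec_norm v)^2 > 0"
      using sp_append_self[OF u v] zz sp_self_ge0[of z] by (metis order_le_neq_trans)
    have cuv: "\<bar>u \<bullet> v\<bar> \<le> vec_norm u * vec_norm v" by (rule cs[OF u v])
    have "z \<bullet> (Pmat n kp ki b *\<^sub>v z) = (2*kp*ki*b) * (vec_norm u)^2 + 2*ki*(u \<bullet> v) + kp * (vec_norm v)^2"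
      using zz P_form[OF u v] by (simp add: vec_norm_sq)
    also have "\<dots> \<ge> (2*kp*ki*b) * (vec_norm u)^2 - (2*ki)*(vec_norm u)*(vec_norm v) + kp * (vec_norm v)^2"
    proof -
      have "ki * (- (vec_norm u * vec_norm v)) \<le> ki * (u \<bullet> v)" using cuv assms by (intro mult_left_mono) auto
      then show ?thesis by (simp add: algebra_simps)
    qed
    finally show "0 < z \<bullet> (Pmat n kp ki b *\<^sub>v z)" using q[of "vec_norm u" "vec_norm v"] mu pos
      by (smt (verit) mult_pos_pos)
  qed
qed

lemma part2_form:
  fixes L b kp ki \<mu> :: real and a \<theta> :: "real mat" and z :: "real vec"
  assumes b: "b > 0" and kp: "kp > 0" and ki: "ki > 0"
    and q: "\<And>s t. \<mu> * (s^2 + t^2) \<le> (ki^2*b)*s^2 - (ki*L)*s*t + (kp^2*b - kp*L - ki)*t^2"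
    and a: "a \<in> carrier_mat n n" and th: "\<theta> \<in> carrier_mat n n"
    and aL: "mat_opnorm a \<le> L" and le: "loewner_le n (b \<cdot>\<^sub>m 1\<^sub>m n) (sym_part \<theta>)"
    and z: "z \<in> carrier_vec (2*n)"
  shows "(Pmat n kp ki b *\<^sub>v z) \<bullet> (Amat n kp ki a \<theta> *\<^sub>v z) \<le> - \<mu> * (z \<bullet> z)"
proof -
  define u where "u = vec_first z n"
  define v where "v = vec_last z n"
  have u: "u \<in> carrier_vec n" and v: "v \<in> carrier_vec n" unfolding u_def v_def by auto
  have zz: "z = u @\<^sub>v v" unfolding u_def v_def by (rule split_vec2[OF z])
  define w where "w = ki \<cdot>\<^sub>v u + kp \<cdot>\<^sub>v v"
  have w: "w \<in> carrier_vec n" unfolding w_def using u v by auto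
  define s where "s = vec_norm u"
  define t where "t = vec_norm v"
  have s0: "s \<ge> 0" and t0: "t \<ge> 0" unfolding s_def t_def by (auto intro: vec_norm_ge0)
  have av: "a *\<^sub>v v \<in> carrier_vec n" using a v by auto
  have nav: "vec_norm (a *\<^sub>v v) \<le> L * t" unfolding t_def by (rule opnorm_bound[OF a aL v])
  have h1: "u \<bullet> (a *\<^sub>v v) \<le> L * s * t"
  proof -
    have "u \<bullet> (a *\<^sub>v v) \<le> s * vec_norm (a *\<^sub>v v)" using cs[OF u av] unfolding s_def by simp
    also have "\<dots> \<le> s * (L * t)" using nav s0 by (rule mult_left_mono)
    finally show ?thesis by (simp add: ac_simps)
  qed
  have h2: "v \<bullet> (a *\<^sub>v v) \<le> L * t * t"
  proof -
    have "v \<bullet> (a *\<^sub>v v) \<le> t * vec_norm (a *\<^sub>v v)" using cs[OF v av] unfolding t_def by simp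
    also have "\<dots> \<le> t * (L * t)" using nav t0 by (rule mult_left_mono)
    finally show ?thesis by (simp add: ac_simps)
  qed
  have wth: "b * (w \<bullet> w) \<le> w \<bullet> (\<theta> *\<^sub>v w)" by (rule sym_part_bound[OF th le w])
  have ww: "w \<bullet> w = ki^2 * (u \<bullet> u) + 2*ki*kp*(u \<bullet> v) + kp^2 * (v \<bullet> v)"
    unfolding w_def using u v
    by (simp add: add_scalar_prod_distrib[of _ n] scalar_prod_add_distrib[of _ n]
       comm_scalar_prod[of v n u] power2_eq_square algebra_simps)
  have wa: "w \<bullet> (a *\<^sub>v v) = ki * (u \<bullet> (a *\<^sub>v v)) + kp * (v \<bullet> (a *\<^sub>v v))"
    unfolding w_def using u v av by (simp add: add_scalar_prod_distrib[of _ n])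
  have vv: "v \<bullet> v = t^2" and uu: "u \<bullet> u = s^2" unfolding s_def t_def by (simp_all add: vec_norm_sq)
  have "(Pmat n kp ki b *\<^sub>v z) \<bullet> (Amat n kp ki a \<theta> *\<^sub>v z) =
     (2*kp*ki*b) * (u \<bullet> v) + ki * t^2 + w \<bullet> (a *\<^sub>v v) - w \<bullet> (\<theta> *\<^sub>v w)"
    unfolding zz PA_form[OF a th u v] w_def[symmetric] vv ..
  also have "\<dots> \<le> (2*kp*ki*b) * (u \<bullet> v) + ki * t^2 + ki * (L*s*t) + kp * (L*t*t) - b * (w \<bullet> w)"
    using wth wa mult_left_mono[OF h1, of ki] mult_left_mono[OF h2, of kp] ki kp by linarith
  also have "\<dots> = -((ki^2*b)*s^2 - (ki*L)*s*t + (kp^2*b - kp*L - ki)*t^2)"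
    unfolding ww uu vv by (simp add: power2_eq_square algebra_simps)
  also have "\<dots> \<le> - \<mu> * (s^2 + t^2)" using q[of s t] by simp
  also have "s^2 + t^2 = z \<bullet> z" unfolding zz s_def t_def by (rule sp_append_self[OF u v, symmetric])
  finally show ?thesis .
qed

theorem proposition4p4:
  fixes L b kp ki :: real
  assumes "L > 0" and "b > 0" and "kp > 0" and "ki > 0"
    and "kp^2 * b > kp * L + ki + L^2 / (4 * b)"
  shows "(\<forall>n\<ge>1. pos_def (2 * n) (Pmat n kp ki b)) \<and>
    (\<exists>\<gamma>>0. \<forall>n\<ge>1. \<forall>a \<theta>. a \<in> carrier_mat n n \<longrightarrow> \<theta> \<in> carrier_mat n n \<longrightarrow>
        mat_opnorm a \<le> L \<longrightarrow> loewner_le n (b \<cdot>\<^sub>m 1\<^sub>m n) (sym_part \<theta>) \<longrightarrow>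
        loewner_le (2 * n)
          (Pmat n kp ki b * Amat n kp ki a \<theta> + transpose_mat (Amat n kp ki a \<theta>) * Pmat n kp ki b)
          ((- \<gamma>) \<cdot>\<^sub>m 1\<^sub>m (2 * n)))"
proof
  have Lb: "L^2 / (4*b) \<ge> 0" using assms by simp
  have kpL: "kp * L > 0" using assms by simp
  show "\<forall>n\<ge>1. pos_def (2 * n) (Pmat n kp ki b)"
  proof (intro allI impI part1)
    have "ki < kp^2 * b" using assms Lb kpL by linarith
    moreover have "kp^2 * b > 0" using assms by simp
    ultimately show "ki < 2 * kp^2 * b" by linarith
  qed (use assms in auto)
  define c where "c = kp^2*b - kp*L - ki"
  have c: "c > L^2/(4*b)" unfolding c_def using assms by linarith
  have c0: "c > 0" using c Lb by linarith
  have disc: "(ki*L)^2 < 4*(ki^2*b)*c"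
  proof -
    have "L^2 < 4*b*c" using c assms(2) by (simp add: field_simps)
    then have "ki^2 * L^2 < ki^2 * (4*b*c)" using assms by simp
    then show ?thesis by (simp add: power_mult_distrib algebra_simps)
  qed
  obtain \<mu> where mu: "\<mu> > 0" and q: "\<And>s t. \<mu> * (s^2 + t^2) \<le> (ki^2*b)*s^2 - (ki*L)*s*t + c*t^2"
    using quad_pos[OF _ c0 disc] assms by auto
  show "\<exists>\<gamma>>0. \<forall>n\<ge>1. \<forall>a \<theta>. a \<in> carrier_mat n n \<longrightarrow> \<theta> \<in> carrier_mat n n \<longrightarrow>
        mat_opnorm a \<le> L \<longrightarrow> loewner_le n (b \<cdot>\<^sub>m 1\<^sub>m n) (sym_part \<theta>) \<longrightarrow>
        loewner_le (2 * n)
          (Pmat n kp ki b * Amat n kp ki a \<theta> + transpose_mat (Amat n kp ki a \<theta>) * Pmat n kp ki b)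
          ((- \<gamma>) \<cdot>\<^sub>m 1\<^sub>m (2 * n))"
  proof (intro exI[of _ "2*\<mu>"] conjI allI impI)
    show "0 < 2*\<mu>" using mu by simp
    fix n :: nat and a \<theta> :: "real mat"
    assume a: "a \<in> carrier_mat n n" and th: "\<theta> \<in> carrier_mat n n" and aL: "mat_opnorm a \<le> L"
      and le: "loewner_le n (b \<cdot>\<^sub>m 1\<^sub>m n) (sym_part \<theta>)"
    let ?P = "Pmat n kp ki b" let ?A = "Amat n kp ki a \<theta>"
    let ?Q = "?P * ?A + transpose_mat ?A * ?P"
    have P: "?P \<in> carrier_mat (2*n) (2*n)" by (rule Pmat_carrier)
    have A: "?A \<in> carrier_mat (2*n) (2*n)" by (rule Amat_carrier[OF a th])
    have Q: "?Q \<in> carrier_mat (2*n) (2*n)" using P A by auto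
    have G: "(- (2*\<mu>)) \<cdot>\<^sub>m 1\<^sub>m (2 * n) \<in> carrier_mat (2*n) (2*n)" by auto
    have QT: "transpose_mat ?Q = ?Q"
      using P A by (simp add: transpose_add[of _ "2*n" "2*n"] transpose_mult[of _ "2*n" "2*n"] Pmat_sym
          comm_add_mat[of _ "2*n" "2*n"])
    have GT: "transpose_mat ((- (2*\<mu>)) \<cdot>\<^sub>m 1\<^sub>m (2 * n)) = (- (2*\<mu>)) \<cdot>\<^sub>m 1\<^sub>m (2 * n)"
      by (rule eq_matI) auto
    show "loewner_le (2 * n) ?Q ((- (2*\<mu>)) \<cdot>\<^sub>m 1\<^sub>m (2 * n))"
      unfolding loewner_le_def psd_def
    proof (intro conjI Q G ballI)
      show "(- (2*\<mu>)) \<cdot>\<^sub>m 1\<^sub>m (2 * n) - ?Q \<in> carrier_mat (2*n) (2*n)" using minus_carrier_mat[OF Q] by simp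
      show "transpose_mat ((- (2*\<mu>)) \<cdot>\<^sub>m 1\<^sub>m (2 * n) - ?Q) = (- (2*\<mu>)) \<cdot>\<^sub>m 1\<^sub>m (2 * n) - ?Q"
        using Q G QT GT by (simp add: transpose_minus[OF G Q])
      fix z :: "real vec" assume z: "z \<in> carrier_vec (2*n)"
      have "((- (2*\<mu>)) \<cdot>\<^sub>m 1\<^sub>m (2 * n) - ?Q) *\<^sub>v z = (- (2*\<mu>)) \<cdot>\<^sub>v z - ?Q *\<^sub>v z"
        using minus_mult_distrib_mat_vec[OF G Q z] z by simp
      then have "z \<bullet> (((- (2*\<mu>)) \<cdot>\<^sub>m 1\<^sub>m (2 * n) - ?Q) *\<^sub>v z) = - (2*\<mu>) * (z \<bullet> z) - z \<bullet> (?Q *\<^sub>v z)"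
        using z Q by (simp add: scalar_prod_minus_distrib[of _ "2*n"])
      also have "z \<bullet> (?Q *\<^sub>v z) = 2 * ((?P *\<^sub>v z) \<bullet> (?A *\<^sub>v z))" by (rule Q_form[OF a th z])
      also have "(?P *\<^sub>v z) \<bullet> (?A *\<^sub>v z) \<le> - \<mu> * (z \<bullet> z)"
        by (rule part2_form[OF assms(2,3,4) _ a th aL le z]) (use q c_def in auto)
      ultimately show "0 \<le> z \<bullet> (((- (2*\<mu>)) \<cdot>\<^sub>m 1\<^sub>m (2 * n) - ?Q) *\<^sub>v z)" by linarith
    qed
  qed
qed

end
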